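(* Let $n_1,n_2,n_3$ be integers with $3\le n_1,n_2\le n_3$. If $3\max(n_1,n_2)\le 2n_3\le n_1n_2$, then the direct product graph $K_{n_1+1}\times K_{n_2+1}\times K_{n_3+1}$ has metric dimension $2(n_3+1)-1=2n_3+1$.
   Context: $K_{m_1}\times K_{m_2}\times K_{m_3}$ denotes the direct product of complete graphs: vertices are triples $(x_1,x_2,x_3)$ with $1\le x_i\le m_i$, and two vertices are adjacent iff they differ in every coordinate. A set $W$ of vertices is resolving if for every two distinct vertices $x,y\notin W$ some $w\in W$ has $d(x,w)\ne d(y,w)$ ($d$ = graph distance). The metric dimension is the minimum size of a resolving set. *)

theory Defs
  imports Main
begin

type_synonym vtx = "nat \<times> nat \<times> nat"

definition kprod_verts :: "nat \<Rightarrow> nat \<Rightarrow> nat \<Rightarrow> vtx set" where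
  "kprod_verts m1 m2 m3 =
     {(a, b, c). 1 \<le> a \<and> a \<le> m1 \<and> 1 \<le> b \<and> b \<le> m2 \<and> 1 \<le> c \<and> c \<le> m3}"

fun kprod_adj :: "vtx \<Rightarrow> vtx \<Rightarrow> bool" where
  "kprod_adj (a, b, c) (a', b', c') = (a \<noteq> a' \<and> b \<noteq> b' \<and> c \<noteq> c')"

definition is_walk :: "'v set \<Rightarrow> ('v \<Rightarrow> 'v \<Rightarrow> bool) \<Rightarrow> 'v \<Rightarrow> 'v \<Rightarrow> nat \<Rightarrow> bool" where
  "is_walk V E x y k \<longleftrightarrow> (\<exists>p :: nat \<Rightarrow> 'v. p 0 = x \<and> p k = y \<and>
      (\<forall>i\<le>k. p i \<in> V) \<and> (\<forall>i<k. E (p i) (p (Suc i))))"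

definition graph_dist :: "'v set \<Rightarrow> ('v \<Rightarrow> 'v \<Rightarrow> bool) \<Rightarrow> 'v \<Rightarrow> 'v \<Rightarrow> nat" where
  "graph_dist V E x y = (LEAST k. is_walk V E x y k)"

definition resolving :: "'v set \<Rightarrow> ('v \<Rightarrow> 'v \<Rightarrow> bool) \<Rightarrow> 'v set \<Rightarrow> bool" where
  "resolving V E W \<longleftrightarrow> W \<subseteq> V \<and>
     (\<forall>x\<in>V - W. \<forall>y\<in>V - W. x \<noteq> y \<longrightarrow> (\<exists>w\<in>W. graph_dist V E x w \<noteq> graph_dist V E y w))"

definition metric_dim :: "'v set \<Rightarrow> ('v \<Rightarrow> 'v \<Rightarrow> bool) \<Rightarrow> nat" where
  "metric_dim V E = (LEAST k. \<exists>W. resolving V E W \<and> card W = k)"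

end

theory Submission
  imports Defs
begin


lemma adj_iff: "kprod_adj x y = (fst x \<noteq> fst y \<and> fst (snd x) \<noteq> fst (snd y) \<and> snd (snd x) \<noteq> snd (snd y))"
  by (cases x; cases y) auto

lemma mem_kv: "x \<in> kprod_verts m1 m2 m3 \<longleftrightarrow> 1 \<le> fst x \<and> fst x \<le> m1 \<and> 1 \<le> fst (snd x) \<and> fst (snd x) \<le> m2 \<and> 1 \<le> snd (snd x) \<and> snd (snd x) \<le> m3"
  by (cases x) (auto simp: kprod_verts_def)

lemma walk0: "is_walk V E x y 0 \<longleftrightarrow> x = y \<and> x \<in> V"
  unfolding is_walk_def by auto

lemma walk1: "is_walk V E x y 1 \<longleftrightarrow> x \<in> V \<and> y \<in> V \<and> E x y"
proof
  assume "is_walk V E x y 1"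
  then obtain p where "p 0 = x" "p 1 = y" "\<forall>i\<le>1. p i \<in> V" "\<forall>i<1. E (p i) (p (Suc i))"
    unfolding is_walk_def by blast
  then show "x \<in> V \<and> y \<in> V \<and> E x y" by force
next
  assume h: "x \<in> V \<and> y \<in> V \<and> E x y"
  show "is_walk V E x y 1" unfolding is_walk_def
    by (rule exI[of _ "\<lambda>i. if i = 0 then x else y"]) (use h in \<open>auto simp: le_Suc_eq\<close>)
qed

lemma walk2: "x \<in> V \<Longrightarrow> y \<in> V \<Longrightarrow> z \<in> V \<Longrightarrow> E x z \<Longrightarrow> E z y \<Longrightarrow> is_walk V E x y 2"
  unfolding is_walk_def
  apply (rule exI[of _ "\<lambda>i. if i = 0 then x else if i = 1 then z else y"])
  apply (auto simp: numeral_2_eq_2 le_Suc_eq less_Suc_eq)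
  done

lemma pick3: "(3::nat) \<le> m \<Longrightarrow> \<exists>z. 1 \<le> z \<and> z \<le> m \<and> z \<noteq> a \<and> z \<noteq> b"
proof -
  assume "3 \<le> m"
  have "{1,2,3::nat} - {a,b} \<noteq> {}" by (cases "a = 1"; cases "a=2"; cases "a=3") auto
  then obtain z where "z \<in> {1,2,3::nat}" "z \<notin> {a,b}" by blast
  with \<open>3\<le>m\<close> show ?thesis by (intro exI[of _ z]) auto
qed

lemma dist_kp:
  assumes m: "3 \<le> m1" "3 \<le> m2" "3 \<le> m3"
    and xv: "x \<in> kprod_verts m1 m2 m3" and yv: "y \<in> kprod_verts m1 m2 m3" and ne: "x \<noteq> y"
  shows "graph_dist (kprod_verts m1 m2 m3) kprod_adj x y = (if kprod_adj x y then 1 else 2)"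
proof -
  let ?V = "kprod_verts m1 m2 m3"
  have n0: "\<not> is_walk ?V kprod_adj x y 0" using ne walk0 by metis
  show ?thesis
  proof (cases "kprod_adj x y")
    case True
    hence "is_walk ?V kprod_adj x y 1" using walk1 xv yv by metis
    hence "(LEAST k. is_walk ?V kprod_adj x y k) = 1"
      apply (intro Least_equality, simp)
      using n0 by (metis less_one not_le)
    then show ?thesis using True unfolding graph_dist_def by simp
  next
    case False
    obtain z1 where z1: "1 \<le> z1" "z1 \<le> m1" "z1 \<noteq> fst x" "z1 \<noteq> fst y" using pick3 m(1) by blast
    obtain z2 where z2: "1 \<le> z2" "z2 \<le> m2" "z2 \<noteq> fst (snd x)" "z2 \<noteq> fst (snd y)" using pick3 m(2) by blast
    obtain z3 where z3: "1 \<le> z3" "z3 \<le> m3" "z3 \<noteq> snd (snd x)" "z3 \<noteq> snd (snd y)" using pick3 m(3) by blast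
    have zv: "(z1,z2,z3) \<in> ?V" using z1 z2 z3 by (simp add: mem_kv)
    have w2: "is_walk ?V kprod_adj x y 2"
      by (rule walk2[OF xv yv zv]) (use z1 z2 z3 in \<open>auto simp: adj_iff\<close>)
    have n1: "\<not> is_walk ?V kprod_adj x y 1" using False walk1 by metis
    have "(LEAST k. is_walk ?V kprod_adj x y k) = 2"
    proof (rule Least_equality)
      show "is_walk ?V kprod_adj x y 2" by (rule w2)
    next
      fix k assume "is_walk ?V kprod_adj x y k"
      with n0 n1 show "2 \<le> k" by (cases k; cases "k - 1") auto
    qed
    then show ?thesis using False unfolding graph_dist_def by simp
  qed
qed



lemma resolving_iff:
  assumes m: "3 \<le> m1" "3 \<le> m2" "3 \<le> m3"
  shows "resolving (kprod_verts m1 m2 m3) kprod_adj W \<longleftrightarrow> W \<subseteq> kprod_verts m1 m2 m3 \<and>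
     (\<forall>x\<in>kprod_verts m1 m2 m3 - W. \<forall>y\<in>kprod_verts m1 m2 m3 - W. x \<noteq> y \<longrightarrow> (\<exists>w\<in>W. kprod_adj x w \<noteq> kprod_adj y w))"
proof -
  let ?V = "kprod_verts m1 m2 m3"
  have key: "graph_dist ?V kprod_adj x w \<noteq> graph_dist ?V kprod_adj y w \<longleftrightarrow> kprod_adj x w \<noteq> kprod_adj y w"
    if "W \<subseteq> ?V" "x \<in> ?V - W" "y \<in> ?V - W" "w \<in> W" for x y w
  proof -
    have "x \<noteq> w" "y \<noteq> w" "w \<in> ?V" using that by auto
    then show ?thesis using dist_kp[OF m, of x w] dist_kp[OF m, of y w] that by auto
  qed
  show ?thesis unfolding resolving_def
  proof (intro iffI conjI ballI impI)
    fix x y assume h: "W \<subseteq> ?V \<and> (\<forall>x\<in>?V - W. \<forall>y\<in>?V - W. x \<noteq> y \<longrightarrow> (\<exists>w\<in>W. graph_dist ?V kprod_adj x w \<noteq> graph_dist ?V kprod_adj y w))"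
      and xy: "x \<in> ?V - W" "y \<in> ?V - W" "x \<noteq> y"
    then obtain w where "w \<in> W" "graph_dist ?V kprod_adj x w \<noteq> graph_dist ?V kprod_adj y w" by blast
    with key[of x y w] h xy show "\<exists>w\<in>W. kprod_adj x w \<noteq> kprod_adj y w" by blast
  next
    fix x y assume h: "W \<subseteq> ?V \<and> (\<forall>x\<in>?V - W. \<forall>y\<in>?V - W. x \<noteq> y \<longrightarrow> (\<exists>w\<in>W. kprod_adj x w \<noteq> kprod_adj y w))"
      and xy: "x \<in> ?V - W" "y \<in> ?V - W" "x \<noteq> y"
    then obtain w where "w \<in> W" "kprod_adj x w \<noteq> kprod_adj y w" by blast
    with key[of x y w] h xy show "\<exists>w\<in>W. graph_dist ?V kprod_adj x w \<noteq> graph_dist ?V kprod_adj y w" by blast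
  qed auto
qed

lemma card_le2: "finite U \<Longrightarrow> card U \<le> 2 \<Longrightarrow> u0 \<in> S \<Longrightarrow> U \<subseteq> S \<Longrightarrow> \<exists>u v. u \<in> S \<and> v \<in> S \<and> U \<subseteq> {u, v}"
proof -
  assume f: "finite U" and c: "card U \<le> 2" and u0: "u0 \<in> S" and s: "U \<subseteq> S"
  consider "card U = 0" | "card U = 1" | "card U = 2" using c by linarith
  then show ?thesis
  proof cases
    case 1 then have "U = {}" using f by simp
    then show ?thesis using u0 by blast
  next
    case 2 then obtain a where "U = {a}" by (metis card_1_singletonE)
    then show ?thesis using s by blast
  next
    case 3 then obtain a b where "U = {a,b}" by (metis card_2_iff)
    then show ?thesis using s by blast
  qed
qed

lemma choose_ab:
  fixes m1 m2 p p' q q' :: nat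
  assumes "3 \<le> m1" "3 \<le> m2" "1 \<le> p" "p \<le> m1" "1 \<le> p'" "p' \<le> m1" "1 \<le> q" "q \<le> m2" "1 \<le> q'" "q' \<le> m2"
  shows "\<exists>a b. 1 \<le> a \<and> a \<le> m1 \<and> 1 \<le> b \<and> b \<le> m2 \<and> (a = p \<or> b = q) \<and> (a = p' \<or> b = q') \<and> (a,b) \<noteq> (p,q) \<and> (a,b) \<noteq> (p',q')"
proof (cases "p = p'")
  case True
  obtain b where "1 \<le> b" "b \<le> m2" "b \<noteq> q" "b \<noteq> q'" using pick3 assms(2) by blast
  then show ?thesis using True assms by (intro exI[of _ p] exI[of _ b]) auto
next
  case F: False
  show ?thesis
  proof (cases "q = q'")
    case True
    obtain a where "1 \<le> a" "a \<le> m1" "a \<noteq> p" "a \<noteq> p'" using pick3 assms(1) by blast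
    then show ?thesis using True assms by (intro exI[of _ a] exI[of _ q]) auto
  next
    case False
    then show ?thesis using F assms by (intro exI[of _ p] exI[of _ q']) auto
  qed
qed

lemma layer_pair:
  assumes m: "3 \<le> m1" "3 \<le> m2" "3 \<le> m3"
    and res: "resolving (kprod_verts m1 m2 m3) kprod_adj W"
    and c: "1 \<le> c" "c \<le> m3" "1 \<le> c'" "c' \<le> m3" "c \<noteq> c'"
  shows "3 \<le> card {w\<in>W. snd (snd w) = c} + card {w\<in>W. snd (snd w) = c'}"
proof (rule ccontr)
  let ?V = "kprod_verts m1 m2 m3"
  assume "\<not> ?thesis"
  hence le: "card {w\<in>W. snd (snd w) = c} + card {w\<in>W. snd (snd w) = c'} \<le> 2" by simp
  have R: "W \<subseteq> ?V" "\<And>x y. x \<in> ?V - W \<Longrightarrow> y \<in> ?V - W \<Longrightarrow> x \<noteq> y \<Longrightarrow> \<exists>w\<in>W. kprod_adj x w \<noteq> kprod_adj y w"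
    using res resolving_iff[OF m] by blast+
  have finV: "finite ?V"
  proof -
    have "?V \<subseteq> {1..m1} \<times> {1..m2} \<times> {1..m3}" by (auto simp: kprod_verts_def)
    then show ?thesis by (rule finite_subset) auto
  qed
  hence finW: "finite W" using R(1) finite_subset by blast
  let ?U = "{w\<in>W. snd (snd w) = c} \<union> {w\<in>W. snd (snd w) = c'}"
  have cU: "card ?U \<le> 2"
    using le card_Un_le[of "{w\<in>W. snd (snd w) = c}" "{w\<in>W. snd (snd w) = c'}"] by linarith
  have one: "(1,1,1) \<in> ?V" using m by (simp add: kprod_verts_def)
  have fU: "finite ?U" using finW by auto
  have sU: "?U \<subseteq> ?V" using R(1) by auto
  obtain u v where uv: "u \<in> ?V" "v \<in> ?V" "?U \<subseteq> {u,v}"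
    using card_le2[OF fU cU one sU] by blast
  obtain a b where ab: "1 \<le> a" "a \<le> m1" "1 \<le> b" "b \<le> m2"
     "a = fst u \<or> b = fst (snd u)" "a = fst v \<or> b = fst (snd v)"
     "(a,b) \<noteq> (fst u, fst (snd u))" "(a,b) \<noteq> (fst v, fst (snd v))"
    using choose_ab[OF m(1,2), of "fst u" "fst v" "fst (snd u)" "fst (snd v)"] uv(1,2)
    by (auto simp: mem_kv)
  let ?x = "(a,b,c)" and ?y = "(a,b,c')"
  have xV: "?x \<in> ?V" and yV: "?y \<in> ?V" using ab c by (auto simp: kprod_verts_def)
  have xW: "?x \<notin> W"
  proof
    assume "?x \<in> W" then have "?x \<in> {u,v}" using uv(3) by auto
    then show False using ab(7,8) by auto
  qed
  have yW: "?y \<notin> W"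
  proof
    assume "?y \<in> W" then have "?y \<in> {u,v}" using uv(3) by auto
    then show False using ab(7,8) by auto
  qed
  have "\<forall>w\<in>W. kprod_adj ?x w = kprod_adj ?y w"
  proof
    fix w assume w: "w \<in> W"
    show "kprod_adj ?x w = kprod_adj ?y w"
    proof (cases "snd (snd w) = c \<or> snd (snd w) = c'")
      case True
      then have "w \<in> {u,v}" using uv(3) w by auto
      then have "fst w = a \<or> fst (snd w) = b" using ab(5,6) by auto
      then show ?thesis by (auto simp: adj_iff)
    qed (auto simp: adj_iff)
  qed
  moreover have "?x \<noteq> ?y" using c by simp
  ultimately show False using R(2)[of ?x ?y] xV yV xW yW by blast
qed

lemma sum_lower:
  fixes f :: "nat \<Rightarrow> nat"
  assumes I: "finite I" "card I = n" "2 \<le> n"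
    and p: "\<And>c c'. c \<in> I \<Longrightarrow> c' \<in> I \<Longrightarrow> c \<noteq> c' \<Longrightarrow> 3 \<le> f c + f c'"
  shows "2 * n - 1 \<le> sum f I"
proof (cases "\<exists>c0\<in>I. f c0 \<le> 1")
  case True
  then obtain c0 where c0: "c0 \<in> I" "f c0 \<le> 1" by blast
  have "sum f I = f c0 + sum f (I - {c0})" using c0 I by (simp add: sum.remove)
  moreover have "sum (\<lambda>_. 3 - f c0) (I - {c0}) \<le> sum f (I - {c0})"
    by (rule sum_mono) (use p c0 in force)
  moreover have "sum (\<lambda>_. 3 - f c0) (I - {c0}) = (n - 1) * (3 - f c0)"
    using c0 I by simp
  ultimately have "f c0 + (n - 1) * (3 - f c0) \<le> sum f I" by linarith
  moreover have "2 * n - 1 \<le> f c0 + (n - 1) * (3 - f c0)"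
  proof -
    have "f c0 = 0 \<or> f c0 = 1" using c0(2) by linarith
    then show ?thesis using I(3) by (elim disjE) (simp_all add: algebra_simps)
  qed
  ultimately show ?thesis by linarith
next
  case False
  then have "sum (\<lambda>_. 2) I \<le> sum f I" by (intro sum_mono) force
  then show ?thesis using I by simp
qed

lemma lower_bound:
  assumes m: "3 \<le> m1" "3 \<le> m2" "3 \<le> m3"
    and res: "resolving (kprod_verts m1 m2 m3) kprod_adj W"
  shows "2 * m3 - 1 \<le> card W"
proof -
  let ?V = "kprod_verts m1 m2 m3"
  let ?S = "\<lambda>c. {w\<in>W. snd (snd w) = c}"
  have WV: "W \<subseteq> ?V" using res unfolding resolving_def by blast
  have sub: "?V \<subseteq> {1..m1} \<times> {1..m2} \<times> {1..m3}" by (auto simp: kprod_verts_def)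
  have finV: "finite ?V" by (rule finite_subset[OF sub]) simp
  have finW: "finite W" using WV finV by (rule finite_subset)
  have W_eq: "(\<Union>c\<in>{1..m3}. ?S c) = W"
  proof (rule set_eqI)
    fix w show "w \<in> (\<Union>c\<in>{1..m3}. ?S c) \<longleftrightarrow> w \<in> W"
    proof
      assume "w \<in> W" then have "w \<in> ?V" using WV by blast
      then have "snd (snd w) \<in> {1..m3}" unfolding mem_kv by simp
      then show "w \<in> (\<Union>c\<in>{1..m3}. ?S c)" using \<open>w \<in> W\<close> by blast
    qed blast
  qed
  have fS: "\<forall>c\<in>{1..m3}. finite (?S c)" using finW by simp
  have dS: "\<forall>c\<in>{1..m3}. \<forall>c'\<in>{1..m3}. c \<noteq> c' \<longrightarrow> ?S c \<inter> ?S c' = {}" by blast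
  have "card (\<Union>c\<in>{1..m3}. ?S c) = (\<Sum>c\<in>{1..m3}. card (?S c))"
    by (rule card_UN_disjoint[OF _ fS dS]) simp
  then have cW: "card W = (\<Sum>c\<in>{1..m3}. card (?S c))" by (simp only: W_eq)
  have pr: "3 \<le> card (?S c) + card (?S c')" if "c \<in> {1..m3}" "c' \<in> {1..m3}" "c \<noteq> c'" for c c'
    using layer_pair[OF m res, of c c'] that by simp
  have "2 * m3 - 1 \<le> (\<Sum>c\<in>{1..m3}. card (?S c))"
    by (rule sum_lower[where n = m3, OF _ _ _ pr]) (use m in simp_all)
  then show ?thesis using cW by simp
qed



type_synonym cell = "nat \<times> nat"

definition cA :: "cell \<Rightarrow> cell \<Rightarrow> cell" where "cA u v = (fst u, snd v)"
definition cB :: "cell \<Rightarrow> cell \<Rightarrow> cell" where "cB u v = (fst v, snd u)"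

definition okpair :: "nat \<Rightarrow> nat \<Rightarrow> cell \<Rightarrow> cell \<Rightarrow> bool" where
  "okpair n1 n2 u v \<longleftrightarrow> fst u < n1 \<and> snd u < n2 \<and> fst v < n1 \<and> snd v < n2 \<and> fst u \<noteq> fst v \<and> snd u \<noteq> snd v"

definition valid :: "nat \<Rightarrow> nat \<Rightarrow> cell list \<Rightarrow> cell list \<Rightarrow> bool" where
  "valid n1 n2 Ul Vl \<longleftrightarrow> length Ul = length Vl \<and> (\<forall>p\<in>set (zip Ul Vl). okpair n1 n2 (fst p) (snd p)) \<and>
     distinct (Ul @ Vl) \<and> distinct (map2 cA Ul Vl @ map2 cB Ul Vl)"

definition rowsok :: "nat \<Rightarrow> cell list \<Rightarrow> bool" where
  "rowsok n1 L \<longleftrightarrow> (\<forall>r<n1. 3 \<le> length (filter (\<lambda>x. fst x = r) L))"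
definition colsok :: "nat \<Rightarrow> cell list \<Rightarrow> bool" where
  "colsok n2 L \<longleftrightarrow> (\<forall>c<n2. 3 \<le> length (filter (\<lambda>x. snd x = c) L))"

definition goodL :: "nat \<Rightarrow> nat \<Rightarrow> cell list \<Rightarrow> cell list \<Rightarrow> bool" where
  "goodL n1 n2 Ul Vl \<longleftrightarrow> valid n1 n2 Ul Vl \<and> rowsok n1 (Ul @ Vl) \<and> colsok n2 (Ul @ Vl)"

lemma valid_ok: "valid n1 n2 Ul Vl \<Longrightarrow> i < length Ul \<Longrightarrow> okpair n1 n2 (Ul!i) (Vl!i)"
proof -
  assume v: "valid n1 n2 Ul Vl" and i: "i < length Ul"
  have "(Ul!i, Vl!i) \<in> set (zip Ul Vl)" using v i unfolding valid_def in_set_zip by auto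
  then show ?thesis using v unfolding valid_def by fastforce
qed

lemma dist_app_nth: "distinct (xs @ ys) \<Longrightarrow> i < length xs \<Longrightarrow> j < length ys \<Longrightarrow> xs!i \<noteq> ys!j"
  by (metis disjoint_iff distinct_append nth_mem)

lemma dist_app_l: "distinct (xs @ ys) \<Longrightarrow> i < length xs \<Longrightarrow> j < length xs \<Longrightarrow> xs!i = xs!j \<Longrightarrow> i = j"
  by (simp add: nth_eq_iff_index_eq)

lemma dist_app_r: "distinct (xs @ ys) \<Longrightarrow> i < length ys \<Longrightarrow> j < length ys \<Longrightarrow> ys!i = ys!j \<Longrightarrow> i = j"
  by (simp add: nth_eq_iff_index_eq)

lemma valid_cA: "valid n1 n2 Ul Vl \<Longrightarrow> i < length Ul \<Longrightarrow> j < length Ul \<Longrightarrow> cA (Ul!i) (Vl!i) = cA (Ul!j) (Vl!j) \<Longrightarrow> i = j"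
  unfolding valid_def using dist_app_l[of "map2 cA Ul Vl" "map2 cB Ul Vl" i j] by simp

lemma valid_cB: "valid n1 n2 Ul Vl \<Longrightarrow> i < length Ul \<Longrightarrow> j < length Ul \<Longrightarrow> cB (Ul!i) (Vl!i) = cB (Ul!j) (Vl!j) \<Longrightarrow> i = j"
  unfolding valid_def using dist_app_r[of "map2 cA Ul Vl" "map2 cB Ul Vl" i j] by simp

lemma valid_cAB: "valid n1 n2 Ul Vl \<Longrightarrow> i < length Ul \<Longrightarrow> j < length Ul \<Longrightarrow> cA (Ul!i) (Vl!i) \<noteq> cB (Ul!j) (Vl!j)"
  unfolding valid_def using dist_app_nth[of "map2 cA Ul Vl" "map2 cB Ul Vl" i j] by simp

lemma valid_UU: "valid n1 n2 Ul Vl \<Longrightarrow> i < length Ul \<Longrightarrow> j < length Ul \<Longrightarrow> Ul!i = Ul!j \<Longrightarrow> i = j"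
  unfolding valid_def using dist_app_l[of Ul Vl i j] by simp

lemma valid_VV: "valid n1 n2 Ul Vl \<Longrightarrow> i < length Ul \<Longrightarrow> j < length Ul \<Longrightarrow> Vl!i = Vl!j \<Longrightarrow> i = j"
  unfolding valid_def using dist_app_r[of Ul Vl i j] by simp

lemma valid_UV: "valid n1 n2 Ul Vl \<Longrightarrow> i < length Ul \<Longrightarrow> j < length Ul \<Longrightarrow> Ul!i \<noteq> Vl!j"
  unfolding valid_def using dist_app_nth[of Ul Vl i j] by simp

lemma three_of_filter:
  assumes "distinct L" "3 \<le> length (filter P L)"
  shows "\<exists>e0 e1 e2. e0 \<in> set L \<and> e1 \<in> set L \<and> e2 \<in> set L \<and> P e0 \<and> P e1 \<and> P e2 \<and> e0 \<noteq> e1 \<and> e0 \<noteq> e2 \<and> e1 \<noteq> e2"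
proof -
  let ?F = "filter P L"
  have d: "distinct ?F" using assms(1) by simp
  have "?F!0 \<in> set ?F" by (rule nth_mem) (use assms(2) in linarith)
  moreover have "?F!1 \<in> set ?F" by (rule nth_mem) (use assms(2) in linarith)
  moreover have "?F!2 \<in> set ?F" by (rule nth_mem) (use assms(2) in linarith)
  moreover have "?F!0 \<noteq> ?F!1" using d assms(2) nth_eq_iff_index_eq[OF d, of 0 1] by linarith
  moreover have "?F!0 \<noteq> ?F!2" using d assms(2) nth_eq_iff_index_eq[OF d, of 0 2] by linarith
  moreover have "?F!1 \<noteq> ?F!2" using d assms(2) nth_eq_iff_index_eq[OF d, of 1 2] by linarith
  moreover have "\<And>x. x \<in> set ?F \<Longrightarrow> x \<in> set L \<and> P x" by simp
  ultimately show ?thesis by (intro exI[of _ "?F!0"] exI[of _ "?F!1"] exI[of _ "?F!2"]) metis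
qed

lemma pigeon3: "P0 \<or> Q0 \<Longrightarrow> P1 \<or> Q1 \<Longrightarrow> P2 \<or> Q2 \<Longrightarrow> \<not> (P0 \<and> P1) \<Longrightarrow> \<not> (P0 \<and> P2) \<Longrightarrow> \<not> (P1 \<and> P2)
  \<Longrightarrow> \<not> (Q0 \<and> Q1) \<Longrightarrow> \<not> (Q0 \<and> Q2) \<Longrightarrow> \<not> (Q1 \<and> Q2) \<Longrightarrow> False"
  by blast

definition Wof :: "nat \<Rightarrow> nat \<Rightarrow> cell list \<Rightarrow> cell list \<Rightarrow> (nat \<times> nat \<times> nat) set" where
  "Wof n1 n2 Ul Vl = insert (n1+1, n2+1, length Ul + 1)
     ((\<lambda>i. (fst (Ul!i)+1, snd (Ul!i)+1, i+1)) ` {..<length Ul} \<union> (\<lambda>i. (fst (Vl!i)+1, snd (Vl!i)+1, i+1)) ` {..<length Ul})"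

lemma cell_in_W:
  assumes v: "valid n1 n2 Ul Vl" and e: "e \<in> set (Ul @ Vl)"
  shows "\<exists>i<length Ul. (e = Ul!i \<or> e = Vl!i) \<and> (fst e + 1, snd e + 1, i+1) \<in> Wof n1 n2 Ul Vl"
proof -
  have l: "length Vl = length Ul" using v valid_def by simp
  from e consider "e \<in> set Ul" | "e \<in> set Vl" by auto
  then show ?thesis
  proof cases
    case 1 then obtain i where "i < length Ul" "e = Ul!i" by (auto simp: in_set_conv_nth)
    then show ?thesis unfolding Wof_def by (intro exI[of _ i]) auto
  next
    case 2 then obtain i where "i < length Ul" "e = Vl!i" using l by (auto simp: in_set_conv_nth)
    then show ?thesis unfolding Wof_def by (intro exI[of _ i]) auto
  qed
qed

lemma same_layer:
  assumes v: "valid n1 n2 Ul Vl" and i: "i < length Ul"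
    and "e = Ul!i \<or> e = Vl!i" and "e' = Ul!i \<or> e' = Vl!i" and "e \<noteq> e'"
  shows "fst e \<noteq> fst e'" "snd e \<noteq> snd e'"
  using valid_ok[OF v i] assms(3-5) unfolding okpair_def by auto



lemma W_sub:
  assumes v: "valid n1 n2 Ul Vl"
  shows "Wof n1 n2 Ul Vl \<subseteq> kprod_verts (n1+1) (n2+1) (length Ul + 1)"
proof
  fix w assume w: "w \<in> Wof n1 n2 Ul Vl"
  then consider "w = (n1+1, n2+1, length Ul + 1)"
    | i where "i < length Ul" "w = (fst (Ul!i)+1, snd (Ul!i)+1, i+1)"
    | i where "i < length Ul" "w = (fst (Vl!i)+1, snd (Vl!i)+1, i+1)"
    unfolding Wof_def by blast
  then show "w \<in> kprod_verts (n1+1) (n2+1) (length Ul + 1)"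
  proof cases
    case 1 then show ?thesis by (simp add: kprod_verts_def)
  next
    case (2 i) then show ?thesis using valid_ok[OF v 2(1)] by (simp add: kprod_verts_def okpair_def)
  next
    case (3 i) then show ?thesis using valid_ok[OF v 3(1)] by (simp add: kprod_verts_def okpair_def)
  qed
qed

lemma W_card:
  assumes v: "valid n1 n2 Ul Vl"
  shows "card (Wof n1 n2 Ul Vl) = 2 * length Ul + 1"
proof -
  let ?K = "length Ul"
  let ?f = "\<lambda>i. (fst (Ul!i)+1, snd (Ul!i)+1, i+1)" and ?g = "\<lambda>i. (fst (Vl!i)+1, snd (Vl!i)+1, i+1)"
  have iF: "inj_on ?f {..<?K}" by (rule inj_onI) simp
  have ig: "inj_on ?g {..<?K}" by (rule inj_onI) simp
  have d: "?f ` {..<?K} \<inter> ?g ` {..<?K} = {}"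
  proof (rule ccontr)
    assume "?f ` {..<?K} \<inter> ?g ` {..<?K} \<noteq> {}"
    then obtain i j where ij: "i < ?K" "j < ?K" "?f i = ?g j" by blast
    then have "i = j" by simp
    with ij have "Ul!i = Vl!i" by (simp add: prod_eq_iff)
    then show False using valid_ok[OF v ij(1)] by (simp add: okpair_def)
  qed
  have z: "(n1+1, n2+1, ?K + 1) \<notin> ?f ` {..<?K} \<union> ?g ` {..<?K}" by auto
  have "card (?f ` {..<?K} \<union> ?g ` {..<?K}) = 2 * ?K"
    using card_Un_disjoint[OF _ _ d] card_image[OF iF] card_image[OF ig] by simp
  then show ?thesis unfolding Wof_def using z by simp
qed

lemma row_step:
  assumes g: "goodL n1 n2 Ul Vl"
    and x: "(a,b,c) \<notin> Wof n1 n2 Ul Vl" and y: "(a',b',c') \<notin> Wof n1 n2 Ul Vl"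
    and eq: "\<forall>w\<in>Wof n1 n2 Ul Vl. kprod_adj (a,b,c) w = kprod_adj (a',b',c') w"
    and a: "1 \<le> a" "a \<le> n1" and ne: "a \<noteq> a'"
  shows False
proof -
  have v: "valid n1 n2 Ul Vl" using g goodL_def by blast
  have dist: "distinct (Ul @ Vl)" using v valid_def by blast
  have "3 \<le> length (filter (\<lambda>x. fst x = a - 1) (Ul @ Vl))"
    using g a unfolding goodL_def rowsok_def by auto
  then obtain e0 e1 e2 where e: "e0 \<in> set (Ul@Vl)" "e1 \<in> set (Ul@Vl)" "e2 \<in> set (Ul@Vl)"
    "fst e0 = a - 1" "fst e1 = a - 1" "fst e2 = a - 1" "e0 \<noteq> e1" "e0 \<noteq> e2" "e1 \<noteq> e2"
    using three_of_filter[OF dist] by blast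
  obtain i0 where i0: "i0 < length Ul" "e0 = Ul!i0 \<or> e0 = Vl!i0" "(fst e0 + 1, snd e0 + 1, i0+1) \<in> Wof n1 n2 Ul Vl"
    using cell_in_W[OF v e(1)] by blast
  obtain i1 where i1: "i1 < length Ul" "e1 = Ul!i1 \<or> e1 = Vl!i1" "(fst e1 + 1, snd e1 + 1, i1+1) \<in> Wof n1 n2 Ul Vl"
    using cell_in_W[OF v e(2)] by blast
  obtain i2 where i2: "i2 < length Ul" "e2 = Ul!i2 \<or> e2 = Vl!i2" "(fst e2 + 1, snd e2 + 1, i2+1) \<in> Wof n1 n2 Ul Vl"
    using cell_in_W[OF v e(3)] by blast
  have h0: "snd e0 + 1 = b' \<or> i0 + 1 = c'"
    using eq i0(3) e(4) a ne by (fastforce simp: adj_iff)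
  have h1: "snd e1 + 1 = b' \<or> i1 + 1 = c'"
    using eq i1(3) e(5) a ne by (fastforce simp: adj_iff)
  have h2: "snd e2 + 1 = b' \<or> i2 + 1 = c'"
    using eq i2(3) e(6) a ne by (fastforce simp: adj_iff)
  have s01: "snd e0 \<noteq> snd e1" using e by (metis prod_eq_iff)
  have s02: "snd e0 \<noteq> snd e2" using e by (metis prod_eq_iff)
  have s12: "snd e1 \<noteq> snd e2" using e by (metis prod_eq_iff)
  have l01: "i0 \<noteq> i1" using same_layer(1)[OF v i0(1) i0(2) _ e(7)] i1(2) e by metis
  have l02: "i0 \<noteq> i2" using same_layer(1)[OF v i0(1) i0(2) _ e(8)] i2(2) e by metis
  have l12: "i1 \<noteq> i2" using same_layer(1)[OF v i1(1) i1(2) _ e(9)] i2(2) e by metis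
  show False
    by (rule pigeon3[OF h0 h1 h2]) (use s01 s02 s12 l01 l02 l12 in auto)
qed

lemma col_step:
  assumes g: "goodL n1 n2 Ul Vl"
    and x: "(a,b,c) \<notin> Wof n1 n2 Ul Vl" and y: "(a',b',c') \<notin> Wof n1 n2 Ul Vl"
    and eq: "\<forall>w\<in>Wof n1 n2 Ul Vl. kprod_adj (a,b,c) w = kprod_adj (a',b',c') w"
    and b: "1 \<le> b" "b \<le> n2" and ne: "b \<noteq> b'"
  shows False
proof -
  have v: "valid n1 n2 Ul Vl" using g goodL_def by blast
  have dist: "distinct (Ul @ Vl)" using v valid_def by blast
  have "3 \<le> length (filter (\<lambda>x. snd x = b - 1) (Ul @ Vl))"
    using g b unfolding goodL_def colsok_def by auto
  then obtain e0 e1 e2 where e: "e0 \<in> set (Ul@Vl)" "e1 \<in> set (Ul@Vl)" "e2 \<in> set (Ul@Vl)"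
    "snd e0 = b - 1" "snd e1 = b - 1" "snd e2 = b - 1" "e0 \<noteq> e1" "e0 \<noteq> e2" "e1 \<noteq> e2"
    using three_of_filter[OF dist] by blast
  obtain i0 where i0: "i0 < length Ul" "e0 = Ul!i0 \<or> e0 = Vl!i0" "(fst e0 + 1, snd e0 + 1, i0+1) \<in> Wof n1 n2 Ul Vl"
    using cell_in_W[OF v e(1)] by blast
  obtain i1 where i1: "i1 < length Ul" "e1 = Ul!i1 \<or> e1 = Vl!i1" "(fst e1 + 1, snd e1 + 1, i1+1) \<in> Wof n1 n2 Ul Vl"
    using cell_in_W[OF v e(2)] by blast
  obtain i2 where i2: "i2 < length Ul" "e2 = Ul!i2 \<or> e2 = Vl!i2" "(fst e2 + 1, snd e2 + 1, i2+1) \<in> Wof n1 n2 Ul Vl"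
    using cell_in_W[OF v e(3)] by blast
  have h0: "fst e0 + 1 = a' \<or> i0 + 1 = c'"
    using eq i0(3) e(4) b ne by (fastforce simp: adj_iff)
  have h1: "fst e1 + 1 = a' \<or> i1 + 1 = c'"
    using eq i1(3) e(5) b ne by (fastforce simp: adj_iff)
  have h2: "fst e2 + 1 = a' \<or> i2 + 1 = c'"
    using eq i2(3) e(6) b ne by (fastforce simp: adj_iff)
  have s01: "fst e0 \<noteq> fst e1" using e by (metis prod_eq_iff)
  have s02: "fst e0 \<noteq> fst e2" using e by (metis prod_eq_iff)
  have s12: "fst e1 \<noteq> fst e2" using e by (metis prod_eq_iff)
  have l01: "i0 \<noteq> i1" using same_layer(2)[OF v i0(1) i0(2) _ e(7)] i1(2) e by metis
  have l02: "i0 \<noteq> i2" using same_layer(2)[OF v i0(1) i0(2) _ e(8)] i2(2) e by metis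
  have l12: "i1 \<noteq> i2" using same_layer(2)[OF v i1(1) i1(2) _ e(9)] i2(2) e by metis
  show False
    by (rule pigeon3[OF h0 h1 h2]) (use s01 s02 s12 l01 l02 l12 in auto)
qed



lemma layer_corner:
  assumes v: "valid n1 n2 Ul Vl" and x: "(a,b,c) \<notin> Wof n1 n2 Ul Vl"
    and c: "1 \<le> c" "c \<le> length Ul" and ab: "1 \<le> a" "1 \<le> b"
    and eq: "\<forall>w\<in>Wof n1 n2 Ul Vl. kprod_adj (a,b,c) w = kprod_adj (a,b,c') w" and ne: "c' \<noteq> c"
  shows "(a-1, b-1) = cA (Ul!(c-1)) (Vl!(c-1)) \<or> (a-1, b-1) = cB (Ul!(c-1)) (Vl!(c-1))"
proof -
  let ?i = "c - 1"
  have i: "?i < length Ul" using c by simp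
  have pU: "(fst (Ul!?i)+1, snd (Ul!?i)+1, c) \<in> Wof n1 n2 Ul Vl"
    unfolding Wof_def using i c by (auto intro!: image_eqI[of _ _ ?i])
  have pV: "(fst (Vl!?i)+1, snd (Vl!?i)+1, c) \<in> Wof n1 n2 Ul Vl"
    unfolding Wof_def using i c by (auto intro!: image_eqI[of _ _ ?i])
  have u1: "a = fst (Ul!?i)+1 \<or> b = snd (Ul!?i)+1" using eq pU ne by (fastforce simp: adj_iff)
  have v1: "a = fst (Vl!?i)+1 \<or> b = snd (Vl!?i)+1" using eq pV ne by (fastforce simp: adj_iff)
  have u2: "\<not> (a = fst (Ul!?i)+1 \<and> b = snd (Ul!?i)+1)" using x pU by auto
  have v2: "\<not> (a = fst (Vl!?i)+1 \<and> b = snd (Vl!?i)+1)" using x pV by auto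
  have o: "fst (Ul!?i) \<noteq> fst (Vl!?i)" "snd (Ul!?i) \<noteq> snd (Vl!?i)"
    using valid_ok[OF v i] by (auto simp: okpair_def)
  show ?thesis using u1 v1 u2 v2 o ab unfolding cA_def cB_def by auto
qed

lemma layer_z:
  assumes x: "c = length Ul + 1"
    and eq: "\<forall>w\<in>Wof n1 n2 Ul Vl. kprod_adj (a,b,c) w = kprod_adj (a,b,c') w" and ne: "c' \<noteq> c"
  shows "a = n1 + 1 \<or> b = n2 + 1"
proof -
  have "(n1+1, n2+1, length Ul + 1) \<in> Wof n1 n2 Ul Vl" unfolding Wof_def by simp
  then show ?thesis using eq x ne by (fastforce simp: adj_iff)
qed

lemma corner_range:
  assumes v: "valid n1 n2 Ul Vl" and i: "i < length Ul"
    and "p = cA (Ul!i) (Vl!i) \<or> p = cB (Ul!i) (Vl!i)"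
  shows "fst p < n1" "snd p < n2"
  using valid_ok[OF v i] assms(3) by (auto simp: okpair_def cA_def cB_def)

theorem levelA:
  assumes g: "goodL n1 n2 Ul Vl" and n: "2 \<le> n1" "2 \<le> n2" "2 \<le> length Ul"
  shows "resolving (kprod_verts (n1+1) (n2+1) (length Ul + 1)) kprod_adj (Wof n1 n2 Ul Vl)"
proof -
  let ?K = "length Ul"
  let ?V = "kprod_verts (n1+1) (n2+1) (?K + 1)"
  let ?W = "Wof n1 n2 Ul Vl"
  have v: "valid n1 n2 Ul Vl" using g goodL_def by blast
  have m: "3 \<le> n1+1" "3 \<le> n2+1" "3 \<le> ?K+1" using n by auto
  show ?thesis unfolding resolving_iff[OF m]
  proof (intro conjI ballI impI)
    show "?W \<subseteq> ?V" by (rule W_sub[OF v])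
  next
    fix x y assume xV: "x \<in> ?V - ?W" and yV: "y \<in> ?V - ?W" and xy: "x \<noteq> y"
    obtain a b c where xe: "x = (a,b,c)" by (cases x)
    obtain a' b' c' where ye: "y = (a',b',c')" by (cases y)
    show "\<exists>w\<in>?W. kprod_adj x w \<noteq> kprod_adj y w"
    proof (rule ccontr)
      assume "\<not> ?thesis"
      then have eq: "\<forall>w\<in>?W. kprod_adj (a,b,c) w = kprod_adj (a',b',c') w" using xe ye by auto
      then have eq': "\<forall>w\<in>?W. kprod_adj (a',b',c') w = kprod_adj (a,b,c) w" by auto
      have xr: "1 \<le> a" "a \<le> n1+1" "1 \<le> b" "b \<le> n2+1" "1 \<le> c" "c \<le> ?K+1"
        using xV xe by (auto simp: kprod_verts_def)
      have yr: "1 \<le> a'" "a' \<le> n1+1" "1 \<le> b'" "b' \<le> n2+1" "1 \<le> c'" "c' \<le> ?K+1"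
        using yV ye by (auto simp: kprod_verts_def)
      have xW: "(a,b,c) \<notin> ?W" and yW: "(a',b',c') \<notin> ?W" using xV yV xe ye by auto
      have aa: "a = a'"
      proof (rule ccontr)
        assume ne: "a \<noteq> a'"
        show False
        proof (cases "a \<le> n1")
          case True then show False using row_step[OF g xW yW eq xr(1) True ne] by simp
        next
          case False then have "a' \<le> n1" using ne xr yr by linarith
          then show False using row_step[OF g yW xW eq' yr(1) _ ] ne by metis
        qed
      qed
      have bb: "b = b'"
      proof (rule ccontr)
        assume ne: "b \<noteq> b'"
        show False
        proof (cases "b \<le> n2")
          case True then show False using col_step[OF g xW yW eq xr(3) True ne] by simp
        next
          case False then have "b' \<le> n2" using ne xr yr by linarith
          then show False using col_step[OF g yW xW eq' yr(3) _ ] ne by metis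
        qed
      qed
      have cc: "c \<noteq> c'" using xy xe ye aa bb by simp
      have eqx: "\<forall>w\<in>?W. kprod_adj (a,b,c) w = kprod_adj (a,b,c') w" using eq aa bb by simp
      have eqy: "\<forall>w\<in>?W. kprod_adj (a,b,c') w = kprod_adj (a,b,c) w" using eq aa bb by simp
      have yW': "(a,b,c') \<notin> ?W" using yW aa bb by simp
      show False
      proof (cases "c \<le> ?K")
        case cK: True
        have C1: "(a-1, b-1) = cA (Ul!(c-1)) (Vl!(c-1)) \<or> (a-1, b-1) = cB (Ul!(c-1)) (Vl!(c-1))"
          by (rule layer_corner[OF v xW xr(5) cK xr(1) xr(3) eqx]) (use cc in simp)
        show False
        proof (cases "c' \<le> ?K")
          case c'K: True
          have C2: "(a-1, b-1) = cA (Ul!(c'-1)) (Vl!(c'-1)) \<or> (a-1, b-1) = cB (Ul!(c'-1)) (Vl!(c'-1))"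
            by (rule layer_corner[OF v yW' yr(5) c'K xr(1) xr(3) eqy]) (use cc in simp)
          have i1: "c - 1 < ?K" "c' - 1 < ?K" using cK c'K xr yr by auto
          have "c - 1 = c' - 1"
            using C1 C2 valid_cA[OF v i1] valid_cB[OF v i1] valid_cAB[OF v i1] valid_cAB[OF v i1(2) i1(1)]
            by metis
          then show False using cc xr yr by simp
        next
          case False
          then have "c' = ?K + 1" using yr by simp
          then have "a = n1 + 1 \<or> b = n2 + 1" using layer_z[OF _ eqy] cc by metis
          moreover have "fst (a-1, b-1) < n1" "snd (a-1, b-1) < n2"
            using corner_range[OF v _ C1] cK xr by auto
          ultimately show False by auto
        qed
      next
        case False
        then have cK1: "c = ?K + 1" using xr by simp
        then have c'K: "c' \<le> ?K" using cc yr by simp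
        have C2: "(a-1, b-1) = cA (Ul!(c'-1)) (Vl!(c'-1)) \<or> (a-1, b-1) = cB (Ul!(c'-1)) (Vl!(c'-1))"
          by (rule layer_corner[OF v yW' yr(5) c'K xr(1) xr(3) eqy]) (use cc in simp)
        have "a = n1 + 1 \<or> b = n2 + 1" using layer_z[OF cK1 eqx] cc by metis
        moreover have "fst (a-1, b-1) < n1" "snd (a-1, b-1) < n2"
          using corner_range[OF v _ C2] c'K yr by auto
        ultimately show False by auto
      qed
    qed
  qed
qed



lemma valid_mono: "valid n1 n2 Ul Vl \<Longrightarrow> n1 \<le> n1' \<Longrightarrow> n2 \<le> n2' \<Longrightarrow> valid n1' n2' Ul Vl"
  unfolding valid_def okpair_def by fastforce

lemma valid_cells_range: "valid n1 n2 Ul Vl \<Longrightarrow> x \<in> set (Ul @ Vl) \<Longrightarrow> fst x < n1 \<and> snd x < n2"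
proof -
  assume v: "valid n1 n2 Ul Vl" and x: "x \<in> set (Ul @ Vl)"
  have l: "length Vl = length Ul" using v valid_def by simp
  from x consider i where "i < length Ul" "x = Ul!i" | i where "i < length Ul" "x = Vl!i"
    using l by (auto simp: in_set_conv_nth)
  then show ?thesis by cases (use valid_ok[OF v] in \<open>auto simp: okpair_def\<close>)
qed

lemma valid_corners_range: "valid n1 n2 Ul Vl \<Longrightarrow> x \<in> set (map2 cA Ul Vl @ map2 cB Ul Vl) \<Longrightarrow> fst x < n1 \<and> snd x < n2"
proof -
  assume v: "valid n1 n2 Ul Vl" and x: "x \<in> set (map2 cA Ul Vl @ map2 cB Ul Vl)"
  have "\<forall>p\<in>set (zip Ul Vl). okpair n1 n2 (fst p) (snd p)" using v valid_def by blast
  then show ?thesis using x by (auto simp: okpair_def cA_def cB_def)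
qed

lemma dist4: "distinct (A @ C) \<Longrightarrow> distinct (B @ D) \<Longrightarrow> set (A @ C) \<inter> set (B @ D) = {} \<Longrightarrow> distinct ((A @ B) @ (C @ D))"
  by (simp add: distinct_append) blast

lemma valid_append:
  assumes v1: "valid n1 n2 Ul Vl" and v2: "valid n1 n2 Nu Nv"
    and d1: "set (Ul @ Vl) \<inter> set (Nu @ Nv) = {}"
    and d2: "set (map2 cA Ul Vl @ map2 cB Ul Vl) \<inter> set (map2 cA Nu Nv @ map2 cB Nu Nv) = {}"
  shows "valid n1 n2 (Ul @ Nu) (Vl @ Nv)"
proof -
  have l1: "length Ul = length Vl" and l2: "length Nu = length Nv" using v1 v2 valid_def by auto
  have z: "zip (Ul @ Nu) (Vl @ Nv) = zip Ul Vl @ zip Nu Nv" using l1 by simp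
  have "distinct (Ul @ Vl)" "distinct (Nu @ Nv)" using v1 v2 valid_def by auto
  then have D1: "distinct ((Ul @ Nu) @ (Vl @ Nv))" using d1 dist4 by blast
  have "distinct (map2 cA Ul Vl @ map2 cB Ul Vl)" "distinct (map2 cA Nu Nv @ map2 cB Nu Nv)"
    using v1 v2 valid_def by auto
  then have D2: "distinct (map2 cA (Ul @ Nu) (Vl @ Nv) @ map2 cB (Ul @ Nu) (Vl @ Nv))"
    using d2 z dist4 by (metis map_append)
  show ?thesis unfolding valid_def using l1 l2 z D1 D2 v1 v2 unfolding valid_def by auto
qed

lemma filter_len_mono: "length (filter P (A @ C)) \<le> length (filter P ((A @ B) @ (C @ D)))"
  by simp

lemma rowsok_mono: "rowsok n1 (A @ C) \<Longrightarrow> rowsok n1 ((A @ B) @ (C @ D))"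
  unfolding rowsok_def using filter_len_mono le_trans by blast

lemma colsok_mono: "colsok n2 (A @ C) \<Longrightarrow> colsok n2 ((A @ B) @ (C @ D))"
  unfolding colsok_def using filter_len_mono le_trans by blast

lemma valid_swap: "valid n1 n2 Ul Vl \<Longrightarrow> valid n2 n1 (map prod.swap Ul) (map prod.swap Vl)"
proof -
  assume v: "valid n1 n2 Ul Vl"
  have l: "length Ul = length Vl" using v valid_def by simp
  have z: "zip (map prod.swap Ul) (map prod.swap Vl) = map (\<lambda>(x,y). (prod.swap x, prod.swap y)) (zip Ul Vl)"
    by (simp add: zip_map_map)
  have a: "map2 cA (map prod.swap Ul) (map prod.swap Vl) = map prod.swap (map2 cB Ul Vl)"
    by (simp add: zip_map_map cA_def cB_def case_prod_beta)
  have b: "map2 cB (map prod.swap Ul) (map prod.swap Vl) = map prod.swap (map2 cA Ul Vl)"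
    by (simp add: zip_map_map cA_def cB_def case_prod_beta)
  have d1: "distinct (Ul @ Vl)" and d2: "distinct (map2 cA Ul Vl @ map2 cB Ul Vl)" using v valid_def by auto
  have injS: "\<And>A. inj_on prod.swap A" by (metis inj_on_inverseI swap_swap)
  have D1: "distinct (map prod.swap Ul @ map prod.swap Vl)"
    using d1 distinct_map[of prod.swap "Ul @ Vl"] injS by simp
  have D2: "distinct (map prod.swap (map2 cB Ul Vl) @ map prod.swap (map2 cA Ul Vl))"
  proof -
    have "distinct (map2 cB Ul Vl @ map2 cA Ul Vl)" using d2 by (metis distinct_append Int_commute)
    then have "distinct (map prod.swap (map2 cB Ul Vl @ map2 cA Ul Vl))"
      using distinct_map injS by blast
    then show ?thesis by (simp only: map_append)
  qed
  have ok: "\<forall>p\<in>set (zip Ul Vl). okpair n1 n2 (fst p) (snd p)" using v valid_def by blast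
  show ?thesis unfolding valid_def
  proof (intro conjI)
    show "length (map prod.swap Ul) = length (map prod.swap Vl)" using l by simp
    show "\<forall>p\<in>set (zip (map prod.swap Ul) (map prod.swap Vl)). okpair n2 n1 (fst p) (snd p)"
      using ok unfolding z by (auto simp: okpair_def)
    show "distinct (map prod.swap Ul @ map prod.swap Vl)" by (rule D1)
    show "distinct (map2 cA (map prod.swap Ul) (map prod.swap Vl) @ map2 cB (map prod.swap Ul) (map prod.swap Vl))"
      unfolding a b by (rule D2)
  qed
qed

lemma rows_swap: "rowsok n L \<Longrightarrow> colsok n (map prod.swap L)"
  unfolding rowsok_def colsok_def by (simp add: filter_map comp_def)

lemma cols_swap: "colsok n L \<Longrightarrow> rowsok n (map prod.swap L)"
  unfolding rowsok_def colsok_def by (simp add: filter_map comp_def)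

lemma goodL_swap: "goodL n1 n2 Ul Vl \<Longrightarrow> goodL n2 n1 (map prod.swap Ul) (map prod.swap Vl)"
  unfolding goodL_def using valid_swap rows_swap cols_swap by (metis map_append)

lemma mod_inj_aux: "m \<le> m' \<Longrightarrow> m' < (n::nat) \<Longrightarrow> (s + m) mod n = (s + m') mod n \<Longrightarrow> m = m'"
proof -
  assume a: "m \<le> m'" "m' < n" "(s + m) mod n = (s + m') mod n"
  have "n dvd (s+m') - (s+m)" using mod_eq_dvd_iff_nat[of "s+m" "s+m'" n] a by simp
  then have "n dvd m' - m" by simp
  moreover have "m' - m < n" using a by simp
  ultimately have "m' - m = 0" using nat_dvd_not_less by blast
  then show ?thesis using a by simp
qed

lemma mod_inj: "m < (n::nat) \<Longrightarrow> m' < n \<Longrightarrow> (s + m) mod n = (s + m') mod n \<Longrightarrow> m = m'"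
  using mod_inj_aux[of m m' n s] mod_inj_aux[of m' m n s] by (cases "m \<le> m'") auto



definition stripU :: "nat \<Rightarrow> nat \<Rightarrow> nat \<Rightarrow> nat \<Rightarrow> cell list" where
  "stripU n1 n2 s k = map (\<lambda>m. (n1, (s+m) mod n2)) [0..<k]"
definition stripV :: "nat \<Rightarrow> nat \<Rightarrow> nat \<Rightarrow> nat \<Rightarrow> cell list" where
  "stripV n1 n2 s k = map (\<lambda>m. (n1+1, (s+m+1) mod n2)) [0..<k]"

lemma zip_maps: "zip (map f xs) (map g xs) = map (\<lambda>x. (f x, g x)) xs"
  by (induction xs) auto

lemma mod_succ_ne: "2 \<le> (n::nat) \<Longrightarrow> (s+m) mod n \<noteq> (s+m+1) mod n"
proof
  assume n: "2 \<le> n" and e: "(s+m) mod n = (s+m+1) mod n"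
  have "n dvd (s+m+1) - (s+m)" using mod_eq_dvd_iff_nat[of "s+m" "s+m+1" n] e by simp
  then have "n dvd 1" by simp
  then show False using n by simp
qed

lemma strip_valid:
  assumes n: "2 \<le> n2" "k \<le> n2"
  shows "valid (n1+2) n2 (stripU n1 n2 s k) (stripV n1 n2 s k)"
proof -
  have z: "zip (stripU n1 n2 s k) (stripV n1 n2 s k) = map (\<lambda>m. ((n1, (s+m) mod n2), (n1+1, (s+m+1) mod n2))) [0..<k]"
    unfolding stripU_def stripV_def by (rule zip_maps)
  have i1: "inj_on (\<lambda>m. (n1::nat, (s+m) mod n2)) {0..<k}"
  proof (rule inj_onI)
    fix x y assume "x \<in> {0..<k}" "y \<in> {0..<k}" "(n1, (s+x) mod n2) = (n1, (s+y) mod n2)"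
    then show "x = y" using n mod_inj[of x n2 y s] by simp
  qed
  have i2: "inj_on (\<lambda>m. (n1+1::nat, (s+m+1) mod n2)) {0..<k}"
  proof (rule inj_onI)
    fix x y assume "x \<in> {0..<k}" "y \<in> {0..<k}" "(n1+1, (s+x+1) mod n2) = (n1+1, (s+y+1) mod n2)"
    then show "x = y" using n mod_inj[of x n2 y "s+1"] by (simp add: add.assoc add.commute add.left_commute)
  qed
  have cA: "map2 cA (stripU n1 n2 s k) (stripV n1 n2 s k) = map (\<lambda>m. (n1, (s+m+1) mod n2)) [0..<k]"
    unfolding z by (simp add: cA_def)
  have cB: "map2 cB (stripU n1 n2 s k) (stripV n1 n2 s k) = map (\<lambda>m. (n1+1, (s+m) mod n2)) [0..<k]"
    unfolding z by (simp add: cB_def)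
  have i3: "inj_on (\<lambda>m. (n1::nat, (s+m+1) mod n2)) {0..<k}"
    using i2 by (auto simp: inj_on_def)
  have i4: "inj_on (\<lambda>m. (n1+1::nat, (s+m) mod n2)) {0..<k}"
    using i1 by (auto simp: inj_on_def)
  show ?thesis unfolding valid_def
  proof (intro conjI)
    show "length (stripU n1 n2 s k) = length (stripV n1 n2 s k)" by (simp add: stripU_def stripV_def)
    show "\<forall>p\<in>set (zip (stripU n1 n2 s k) (stripV n1 n2 s k)). okpair (n1 + 2) n2 (fst p) (snd p)"
      unfolding z using n mod_succ_ne[of n2 s] by (auto simp: okpair_def)
    show "distinct (stripU n1 n2 s k @ stripV n1 n2 s k)"
      unfolding stripU_def stripV_def using i1 i2 by (auto simp: distinct_map)
    show "distinct (map2 cA (stripU n1 n2 s k) (stripV n1 n2 s k) @ map2 cB (stripU n1 n2 s k) (stripV n1 n2 s k))"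
      unfolding cA cB using i3 i4 by (auto simp: distinct_map)
  qed
qed

lemma strip_cells: "x \<in> set (stripU n1 n2 s k @ stripV n1 n2 s k) \<Longrightarrow> n1 \<le> fst x"
  unfolding stripU_def stripV_def by auto

lemma strip_corners: "x \<in> set (map2 cA (stripU n1 n2 s k) (stripV n1 n2 s k) @ map2 cB (stripU n1 n2 s k) (stripV n1 n2 s k)) \<Longrightarrow> n1 \<le> fst x"
  unfolding stripU_def stripV_def by (auto simp: zip_maps cA_def cB_def)

lemma strip_valid_grow:
  assumes v: "valid n1 n2 Ul Vl" and n: "2 \<le> n2" "k \<le> n2"
  shows "valid (n1+2) n2 (Ul @ stripU n1 n2 s k) (Vl @ stripV n1 n2 s k)"
proof (rule valid_append)
  show "valid (n1+2) n2 Ul Vl" using valid_mono[OF v] by simp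
  show "valid (n1+2) n2 (stripU n1 n2 s k) (stripV n1 n2 s k)" by (rule strip_valid[OF n])
  show "set (Ul @ Vl) \<inter> set (stripU n1 n2 s k @ stripV n1 n2 s k) = {}"
    using valid_cells_range[OF v] strip_cells by (meson disjoint_iff not_le)
  show "set (map2 cA Ul Vl @ map2 cB Ul Vl) \<inter> set (map2 cA (stripU n1 n2 s k) (stripV n1 n2 s k) @ map2 cB (stripU n1 n2 s k) (stripV n1 n2 s k)) = {}"
    using valid_corners_range[OF v] strip_corners by (meson disjoint_iff not_le)
qed

lemma filter_all: "(\<forall>x\<in>set xs. P x) \<Longrightarrow> length (filter P xs) = length xs"
  by (simp add: filter_id_conv)

lemma strip_grow:
  assumes g: "goodL n1 n2 Ul Vl" and n: "2 \<le> n2" "3 \<le> k" "k \<le> n2"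
  shows "goodL (n1+2) n2 (Ul @ stripU n1 n2 s k) (Vl @ stripV n1 n2 s k)"
proof -
  have v: "valid n1 n2 Ul Vl" using g goodL_def by blast
  have R: "rowsok n1 (Ul @ Vl)" and C: "colsok n2 (Ul @ Vl)" using g goodL_def by auto
  have rows: "rowsok (n1+2) ((Ul @ stripU n1 n2 s k) @ (Vl @ stripV n1 n2 s k))"
    unfolding rowsok_def
  proof (intro allI impI)
    fix r assume r: "r < n1 + 2"
    let ?L = "(Ul @ stripU n1 n2 s k) @ (Vl @ stripV n1 n2 s k)"
    consider "r < n1" | "r = n1" | "r = n1 + 1" using r by linarith
    then show "3 \<le> length (filter (\<lambda>x. fst x = r) ?L)"
    proof cases
      case 1 then show ?thesis using rowsok_mono[OF R] unfolding rowsok_def by blast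
    next
      case 2
      have "length (filter (\<lambda>x. fst x = r) (stripU n1 n2 s k)) = k"
        using 2 by (subst filter_all) (auto simp: stripU_def)
      then show ?thesis using n by simp
    next
      case 3
      have "length (filter (\<lambda>x. fst x = r) (stripV n1 n2 s k)) = k"
        using 3 by (subst filter_all) (auto simp: stripV_def)
      then show ?thesis using n by simp
    qed
  qed
  show ?thesis unfolding goodL_def
    using strip_valid_grow[OF v n(1) n(3)] rows colsok_mono[OF C] by blast
qed

lemma three_filter:
  assumes "x \<in> set L" "y \<in> set L" "z \<in> set L" "P x" "P y" "P z" "x \<noteq> y" "x \<noteq> z" "y \<noteq> z"
  shows "3 \<le> length (filter P L)"
proof -
  have "{x,y,z} \<subseteq> set (filter P L)" using assms by auto
  then have "card {x,y,z} \<le> card (set (filter P L))" by (intro card_mono) auto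
  also have "\<dots> \<le> length (filter P L)" by (rule card_length)
  finally show ?thesis using assms by simp
qed



lemma swap_swap_list: "map prod.swap (map prod.swap xs) = xs"
  by (induction xs) auto

lemma filt_mono4: "length (filter P (Ul @ Vl)) \<le> length (filter P (((Ul @ X) @ Y) @ ((Vl @ Z) @ T)))"
  by simp

definition LU :: "nat \<Rightarrow> nat \<Rightarrow> nat \<Rightarrow> nat \<Rightarrow> cell list \<Rightarrow> cell list" where
  "LU n1 n2 k1 k2 Ul = (Ul @ map prod.swap (stripU n2 n1 0 k2)) @ stripU n1 (n2+2) (n2 - 1) k1"
definition LV :: "nat \<Rightarrow> nat \<Rightarrow> nat \<Rightarrow> nat \<Rightarrow> cell list \<Rightarrow> cell list" where
  "LV n1 n2 k1 k2 Vl = (Vl @ map prod.swap (stripV n2 n1 0 k2)) @ stripV n1 (n2+2) (n2 - 1) k1"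

lemma L_grow:
  assumes g: "goodL n1 n2 Ul Vl" and n: "2 \<le> n1" "1 \<le> n2"
    and k: "3 \<le> k1" "k1 \<le> n2 + 2" "1 \<le> k2" "k2 \<le> n1"
  shows "goodL (n1+2) (n2+2) (LU n1 n2 k1 k2 Ul) (LV n1 n2 k1 k2 Vl) \<and> length (LU n1 n2 k1 k2 Ul) = length Ul + k1 + k2"
proof -
  have v: "valid n1 n2 Ul Vl" using g goodL_def by blast
  have R: "rowsok n1 (Ul @ Vl)" and C: "colsok n2 (Ul @ Vl)" using g goodL_def by auto
  have v1: "valid (n2+2) n1 (map prod.swap Ul @ stripU n2 n1 0 k2) (map prod.swap Vl @ stripV n2 n1 0 k2)"
    by (rule strip_valid_grow[OF valid_swap[OF v] n(1) k(4)])
  have v2: "valid n1 (n2+2) (Ul @ map prod.swap (stripU n2 n1 0 k2)) (Vl @ map prod.swap (stripV n2 n1 0 k2))"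
    using valid_swap[OF v1] by (simp add: swap_swap_list)
  have v3: "valid (n1+2) (n2+2) (LU n1 n2 k1 k2 Ul) (LV n1 n2 k1 k2 Vl)"
    unfolding LU_def LV_def by (rule strip_valid_grow[OF v2]) (use k in auto)
  let ?RU = "stripU n1 (n2+2) (n2 - 1) k1" and ?RV = "stripV n1 (n2+2) (n2 - 1) k1"
  let ?CU = "map prod.swap (stripU n2 n1 0 k2)" and ?CV = "map prod.swap (stripV n2 n1 0 k2)"
  let ?L = "LU n1 n2 k1 k2 Ul @ LV n1 n2 k1 k2 Vl"
  have Leq: "?L = ((Ul @ ?CU) @ ?RU) @ ((Vl @ ?CV) @ ?RV)" unfolding LU_def LV_def by simp
  have rows: "rowsok (n1+2) ?L"
    unfolding rowsok_def
  proof (intro allI impI)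
    fix r assume r: "r < n1 + 2"
    consider "r < n1" | "r = n1" | "r = n1 + 1" using r by linarith
    then show "3 \<le> length (filter (\<lambda>x. fst x = r) ?L)"
    proof cases
      case 1 then show ?thesis using R filt_mono4[of "\<lambda>x. fst x = r" Ul Vl] unfolding rowsok_def Leq
        using le_trans by blast
    next
      case 2
      have "length (filter (\<lambda>x. fst x = r) ?RU) = k1"
        using 2 by (subst filter_all) (auto simp: stripU_def)
      then show ?thesis using k unfolding Leq by simp
    next
      case 3
      have "length (filter (\<lambda>x. fst x = r) ?RV) = k1"
        using 3 by (subst filter_all) (auto simp: stripV_def)
      then show ?thesis using k unfolding Leq by simp
    qed
  qed
  have m1: "(n1, n2) \<in> set ?RU" unfolding stripU_def using k n by (auto intro!: image_eqI[where x=1])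
  have m2: "(n1+1, n2) \<in> set ?RV" unfolding stripV_def using k n by (auto intro!: image_eqI[where x=0])
  have m3: "(0, n2) \<in> set ?CU" unfolding stripU_def using k n by (auto intro!: image_eqI[where x=0])
  have m4: "(n1, n2+1) \<in> set ?RU" unfolding stripU_def using k n by (auto intro!: image_eqI[where x=2])
  have m5: "(n1+1, n2+1) \<in> set ?RV" unfolding stripV_def using k n by (auto intro!: image_eqI[where x=1])
  have m6: "(1 mod n1, n2+1) \<in> set ?CV" unfolding stripV_def using k n by (auto intro!: image_eqI[where x=0])
  have cols: "colsok (n2+2) ?L"
    unfolding colsok_def
  proof (intro allI impI)
    fix c assume c: "c < n2 + 2"
    consider "c < n2" | "c = n2" | "c = n2 + 1" using c by linarith
    then show "3 \<le> length (filter (\<lambda>x. snd x = c) ?L)"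
    proof cases
      case 1 then show ?thesis using C filt_mono4[of "\<lambda>x. snd x = c" Ul Vl] unfolding colsok_def Leq
        using le_trans by blast
    next
      case 2
      show ?thesis by (rule three_filter[of "(n1, n2)" _ "(n1+1, n2)" "(0, n2)"]) (use 2 m1 m2 m3 n in \<open>auto simp: Leq\<close>)
    next
      case 3
      show ?thesis by (rule three_filter[of "(n1, n2+1)" _ "(n1+1, n2+1)" "(1 mod n1, n2+1)"]) (use 3 m4 m5 m6 n in \<open>auto simp: Leq\<close>)
    qed
  qed
  have len: "length (LU n1 n2 k1 k2 Ul) = length Ul + k1 + k2"
    unfolding LU_def by (simp add: stripU_def)
  show ?thesis unfolding goodL_def using v3 rows cols len by blast
qed



definition desig :: "cell list \<Rightarrow> cell list \<Rightarrow> bool" where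
  "desig Ul Vl \<longleftrightarrow> 2 \<le> length Ul \<and> fst (Vl!0) \<noteq> fst (Ul!1) \<and> fst (Vl!1) \<noteq> fst (Ul!0) \<and>
     snd (Vl!1) \<noteq> snd (Ul!0) \<and> snd (Vl!0) \<noteq> snd (Ul!1) \<and> snd (Vl!0) \<noteq> snd (Vl!1) \<and> fst (Vl!0) \<noteq> fst (Vl!1)"

definition SU :: "nat \<Rightarrow> nat \<Rightarrow> cell list \<Rightarrow> cell list \<Rightarrow> cell list" where
  "SU n1 n2 Ul Vl = Ul @ [(n1, n2+1), (n1+1, n2), (n1, snd (Vl!0))]"
definition SV :: "nat \<Rightarrow> nat \<Rightarrow> cell list \<Rightarrow> cell list \<Rightarrow> cell list" where
  "SV n1 n2 Ul Vl = (n1, n2) # (n1+1, n2+1) # drop 2 Vl @ [(fst (Vl!0), n2), (fst (Vl!1), n2+1), (n1+1, snd (Vl!1))]"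

lemma corner_helper:
  fixes X Y :: "cell list"
  assumes "distinct (X @ Y)" "\<And>x. x \<in> set (X @ Y) \<Longrightarrow> fst x < n1 \<and> snd x < n2"
    and hX: "\<And>a b. (a,b) \<in> set X \<Longrightarrow> a < n1 \<and> b < n2" and hY: "\<And>a b. (a,b) \<in> set Y \<Longrightarrow> a < n1 \<and> b < n2"
    and "fu0 < n1" "su0 < n2" "fv0 < n1" "sv0 < n2" "fu1 < n1" "su1 < n2" "fv1 < n1" "sv1 < n2"
    "fv0 \<noteq> fu1" "fv1 \<noteq> fu0" "sv1 \<noteq> su0" "sv0 \<noteq> su1"
  shows "distinct (((fu0, n2) # (fu1, n2+1) # X @ [(n1, n2), (n1+1, n2+1), (n1, sv1)]) @
     ((n1, su0) # (n1+1, su1) # Y @ [(fv0, n2+1), (fv1, n2), (n1+1, sv0)]))"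
  using assms(1) assms(5-) by (auto dest: hX hY)

lemma surgery:
  assumes g: "goodL n1 n2 Ul Vl" and d: "desig Ul Vl"
  shows "goodL (n1+2) (n2+2) (SU n1 n2 Ul Vl) (SV n1 n2 Ul Vl) \<and> desig (SU n1 n2 Ul Vl) (SV n1 n2 Ul Vl)
     \<and> length (SU n1 n2 Ul Vl) = length Ul + 3"
proof -
  have v: "valid n1 n2 Ul Vl" using g goodL_def by blast
  have R: "rowsok n1 (Ul @ Vl)" and C: "colsok n2 (Ul @ Vl)" using g goodL_def by auto
  have l: "length Vl = length Ul" using v valid_def by simp
  obtain u0 u1 Ur where Ue: "Ul = u0 # u1 # Ur" using d unfolding desig_def
    by (metis One_nat_def Suc_1 Suc_le_length_iff)
  obtain v0 v1 Vr where Ve: "Vl = v0 # v1 # Vr" using d l unfolding desig_def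
    by (metis One_nat_def Suc_1 Suc_le_length_iff)
  have lr: "length Vr = length Ur" using l Ue Ve by simp
  have D: "fst v0 \<noteq> fst u1" "fst v1 \<noteq> fst u0" "snd v1 \<noteq> snd u0" "snd v0 \<noteq> snd u1" "snd v0 \<noteq> snd v1" "fst v0 \<noteq> fst v1"
    using d Ue Ve unfolding desig_def by auto
  have okall: "\<forall>p\<in>set (zip Ul Vl). okpair n1 n2 (fst p) (snd p)" using v valid_def by blast
  have ok0: "okpair n1 n2 u0 v0" and ok1: "okpair n1 n2 u1 v1" and okr: "\<forall>p\<in>set (zip Ur Vr). okpair n1 n2 (fst p) (snd p)"
    using okall Ue Ve by auto
  have dold: "distinct (u0 # u1 # Ur @ v0 # v1 # Vr)" using v Ue Ve valid_def by simp
  have cold: "distinct ((cA u0 v0 # cA u1 v1 # map2 cA Ur Vr) @ (cB u0 v0 # cB u1 v1 # map2 cB Ur Vr))"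
    using v Ue Ve valid_def by simp
  have rngr: "\<forall>x\<in>set (Ur @ Vr). fst x < n1 \<and> snd x < n2"
    using valid_cells_range[OF v] Ue Ve by auto
  have nU: "\<And>x. x \<in> set Ur \<Longrightarrow> fst x < n1 \<and> snd x < n2" and nV: "\<And>x. x \<in> set Vr \<Longrightarrow> fst x < n1 \<and> snd x < n2"
    using rngr by auto
  have crng: "\<forall>x\<in>set (map2 cA Ur Vr @ map2 cB Ur Vr). fst x < n1 \<and> snd x < n2"
    using valid_corners_range[OF v] Ue Ve by auto
  have nC: "\<And>x. x \<in> set (map2 cA Ur Vr @ map2 cB Ur Vr) \<Longrightarrow> fst x < n1 \<and> snd x < n2"
    using crng by blast
  have r0: "fst u0 < n1" "snd u0 < n2" "fst v0 < n1" "snd v0 < n2" "fst u0 \<noteq> fst v0" "snd u0 \<noteq> snd v0"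
    using ok0 okpair_def by auto
  have r1: "fst u1 < n1" "snd u1 < n2" "fst v1 < n1" "snd v1 < n2" "fst u1 \<noteq> fst v1" "snd u1 \<noteq> snd v1"
    using ok1 okpair_def by auto
  let ?U = "u0 # u1 # Ur @ [(n1, n2+1), (n1+1, n2), (n1, snd v0)]"
  let ?V = "(n1, n2) # (n1+1, n2+1) # Vr @ [(fst v0, n2), (fst v1, n2+1), (n1+1, snd v1)]"
  have SUe: "SU n1 n2 Ul Vl = ?U" unfolding SU_def Ue Ve by simp
  have SVe: "SV n1 n2 Ul Vl = ?V" unfolding SV_def Ue Ve by simp
  have zipe: "zip ?U ?V = (u0, (n1,n2)) # (u1, (n1+1,n2+1)) # zip Ur Vr @
      [((n1, n2+1), (fst v0, n2)), ((n1+1, n2), (fst v1, n2+1)), ((n1, snd v0), (n1+1, snd v1))]"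
    using lr by simp
  have valid': "valid (n1+2) (n2+2) ?U ?V"
    unfolding valid_def
  proof (intro conjI)
    show "length ?U = length ?V" using lr by simp
    show "\<forall>p\<in>set (zip ?U ?V). okpair (n1 + 2) (n2 + 2) (fst p) (snd p)"
      unfolding zipe using r0 r1 D okr by (auto simp: okpair_def)
    show "distinct (?U @ ?V)"
      using dold r0 r1 by (auto dest: nU nV)
    have cAe: "map2 cA ?U ?V = (fst u0, n2) # (fst u1, n2+1) # map2 cA Ur Vr @ [(n1, n2), (n1+1, n2+1), (n1, snd v1)]"
      unfolding zipe by (simp add: cA_def)
    have cBe: "map2 cB ?U ?V = (n1, snd u0) # (n1+1, snd u1) # map2 cB Ur Vr @ [(fst v0, n2+1), (fst v1, n2), (n1+1, snd v0)]"
      unfolding zipe by (simp add: cB_def)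
    have cold2: "distinct (map2 cA Ur Vr @ map2 cB Ur Vr)" using cold by auto
    show "distinct (map2 cA ?U ?V @ map2 cB ?U ?V)"
      unfolding cAe cBe by (rule corner_helper[OF cold2 nC]) (use r0 r1 D nC in force)+
  qed
  let ?L = "?U @ ?V"
  have rows: "rowsok (n1+2) ?L"
    unfolding rowsok_def
  proof (intro allI impI)
    fix r assume r: "r < n1 + 2"
    consider "r < n1" | "r = n1" | "r = n1 + 1" using r by linarith
    then show "3 \<le> length (filter (\<lambda>x. fst x = r) ?L)"
    proof cases
      case 1
      have a: "3 \<le> length (filter (\<lambda>x. fst x = r) (Ul @ Vl))" using R 1 rowsok_def by blast
      have "length (filter (\<lambda>x. fst x = r) ?L) = length (filter (\<lambda>x. fst x = r) (Ul @ Vl))"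
        unfolding Ue Ve using 1 by simp
      then show ?thesis using a by linarith
    next
      case 2
      show ?thesis by (rule three_filter[of "(n1, n2+1)" _ "(n1, snd v0)" "(n1, n2)"]) (use 2 r0 in auto)
    next
      case 3
      show ?thesis by (rule three_filter[of "(n1+1, n2)" _ "(n1+1, n2+1)" "(n1+1, snd v1)"]) (use 3 r1 in auto)
    qed
  qed
  have cols: "colsok (n2+2) ?L"
    unfolding colsok_def
  proof (intro allI impI)
    fix c assume c: "c < n2 + 2"
    consider "c < n2" | "c = n2" | "c = n2 + 1" using c by linarith
    then show "3 \<le> length (filter (\<lambda>x. snd x = c) ?L)"
    proof cases
      case 1
      have a: "3 \<le> length (filter (\<lambda>x. snd x = c) (Ul @ Vl))" using C 1 colsok_def by blast
      have "length (filter (\<lambda>x. snd x = c) ?L) = length (filter (\<lambda>x. snd x = c) (Ul @ Vl))"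
        unfolding Ue Ve using 1 by simp
      then show ?thesis using a by linarith
    next
      case 2
      show ?thesis by (rule three_filter[of "(n1+1, n2)" _ "(n1, n2)" "(fst v0, n2)"]) (use 2 r0 in auto)
    next
      case 3
      show ?thesis by (rule three_filter[of "(n1, n2+1)" _ "(n1+1, n2+1)" "(fst v1, n2+1)"]) (use 3 r1 in auto)
    qed
  qed
  have des: "desig ?U ?V" unfolding desig_def using r0 r1 by auto
  show ?thesis unfolding SUe SVe goodL_def using valid' rows cols des Ue by simp
qed



definition b346U :: "cell list" where "b346U = [(1,1), (1,3), (0,2), (1,2), (2,3), (2,1)]"
definition b346V :: "cell list" where "b346V = [(2,2), (0,0), (2,0), (0,1), (1,0), (0,3)]"
lemma b346: "goodL 3 4 b346U b346V" unfolding b346U_def b346V_def by code_simp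
lemma b346_len: "length b346U = 6" unfolding b346U_def by simp
lemma b346_d: "desig b346U b346V" unfolding b346U_def b346V_def by code_simp

definition b446U :: "cell list" where "b446U = [(2,3), (3,1), (3,3), (0,1), (0,0), (3,2)]"
definition b446V :: "cell list" where "b446V = [(1,0), (0,2), (2,1), (1,2), (1,3), (2,0)]"
lemma b446: "goodL 4 4 b446U b446V" unfolding b446U_def b446V_def by code_simp
lemma b446_len: "length b446U = 6" unfolding b446U_def by simp
lemma b446_d: "desig b446U b446V" unfolding b446U_def b446V_def by code_simp

definition b447U :: "cell list" where "b447U = [(3,1), (0,2), (3,3), (2,1), (2,3), (2,2), (2,0)]"
definition b447V :: "cell list" where "b447V = [(0,0), (1,0), (1,1), (1,2), (3,0), (0,1), (1,3)]"
lemma b447: "goodL 4 4 b447U b447V" unfolding b447U_def b447V_def by code_simp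
lemma b447_len: "length b447U = 7" unfolding b447U_def by simp

definition b448U :: "cell list" where "b448U = [(3,2), (0,3), (1,3), (2,3), (1,2), (2,1), (2,2), (0,2)]"
definition b448V :: "cell list" where "b448V = [(0,0), (1,0), (0,1), (3,1), (2,0), (3,3), (3,0), (1,1)]"
lemma b448: "goodL 4 4 b448U b448V" unfolding b448U_def b448V_def by code_simp
lemma b448_len: "length b448U = 8" unfolding b448U_def by simp

definition b458U :: "cell list" where "b458U = [(3,0), (2,1), (0,1), (2,2), (1,4), (0,4), (1,0), (1,1)]"
definition b458V :: "cell list" where "b458V = [(1,3), (0,2), (2,0), (0,0), (0,3), (2,3), (3,4), (3,2)]"
lemma b458: "goodL 4 5 b458U b458V" unfolding b458U_def b458V_def by code_simp
lemma b458_len: "length b458U = 8" unfolding b458U_def by simp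
lemma b458_d: "desig b458U b458V" unfolding b458U_def b458V_def by code_simp

definition b459U :: "cell list" where "b459U = [(2,0), (1,1), (2,3), (0,4), (1,4), (3,4), (2,4), (1,3), (3,1)]"
definition b459V :: "cell list" where "b459V = [(0,3), (2,2), (0,0), (3,2), (0,1), (2,1), (1,2), (3,0), (0,2)]"
lemma b459: "goodL 4 5 b459U b459V" unfolding b459U_def b459V_def by code_simp
lemma b459_len: "length b459U = 9" unfolding b459U_def by simp

definition b4510U :: "cell list" where "b4510U = [(2,3), (3,1), (3,0), (0,2), (2,2), (1,0), (1,1), (2,4), (0,4), (0,3)]"
definition b4510V :: "cell list" where "b4510V = [(0,1), (1,3), (2,1), (1,4), (3,4), (3,3), (0,0), (3,2), (1,2), (2,0)]"
lemma b4510: "goodL 4 5 b4510U b4510V" unfolding b4510U_def b4510V_def by code_simp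
lemma b4510_len: "length b4510U = 10" unfolding b4510U_def by simp

definition b558U :: "cell list" where "b558U = [(4,1), (3,3), (1,0), (4,2), (4,0), (0,3), (3,0), (0,2)]"
definition b558V :: "cell list" where "b558V = [(2,2), (0,4), (3,1), (2,4), (2,3), (1,1), (0,1), (1,4)]"
lemma b558: "goodL 5 5 b558U b558V" unfolding b558U_def b558V_def by code_simp
lemma b558_len: "length b558U = 8" unfolding b558U_def by simp
lemma b558_d: "desig b558U b558V" unfolding b558U_def b558V_def by code_simp

definition b559U :: "cell list" where "b559U = [(2,3), (1,2), (4,1), (2,4), (0,4), (4,4), (3,4), (3,2), (0,1)]"
definition b559V :: "cell list" where "b559V = [(3,1), (0,0), (1,0), (0,3), (3,0), (2,2), (4,0), (1,1), (4,3)]"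
lemma b559: "goodL 5 5 b559U b559V" unfolding b559U_def b559V_def by code_simp
lemma b559_len: "length b559U = 9" unfolding b559U_def by simp

definition b5510U :: "cell list" where "b5510U = [(3,4), (1,1), (2,1), (0,2), (2,3), (1,2), (3,1), (4,3), (4,1), (0,3)]"
definition b5510V :: "cell list" where "b5510V = [(4,0), (4,2), (0,4), (3,3), (1,0), (2,4), (1,4), (3,2), (3,0), (4,4)]"
lemma b5510: "goodL 5 5 b5510U b5510V" unfolding b5510U_def b5510V_def by code_simp
lemma b5510_len: "length b5510U = 10" unfolding b5510U_def by simp

definition b5511U :: "cell list" where "b5511U = [(3,0), (2,0), (2,2), (0,2), (3,1), (3,2), (0,3), (0,4), (0,1), (3,3), (4,2)]"
definition b5511V :: "cell list" where "b5511V = [(1,2), (4,1), (0,0), (4,3), (1,4), (1,3), (4,0), (2,1), (3,4), (1,0), (2,4)]"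
lemma b5511: "goodL 5 5 b5511U b5511V" unfolding b5511U_def b5511V_def by code_simp
lemma b5511_len: "length b5511U = 11" unfolding b5511U_def by simp

definition b5512U :: "cell list" where "b5512U = [(2,1), (4,0), (0,1), (3,4), (2,3), (1,1), (0,4), (0,0), (3,3), (0,3), (1,0), (4,4)]"
definition b5512V :: "cell list" where "b5512V = [(1,3), (3,2), (2,0), (4,3), (4,2), (3,0), (2,2), (4,1), (0,2), (1,4), (2,4), (3,1)]"
lemma b5512: "goodL 5 5 b5512U b5512V" unfolding b5512U_def b5512V_def by code_simp
lemma b5512_len: "length b5512U = 12" unfolding b5512U_def by simp


lemma claimA:
  "3 \<le> n1 \<Longrightarrow> n1 \<le> n2 \<Longrightarrow> n2 \<le> n1 + 1 \<Longrightarrow> (n1,n2) \<noteq> (3,3) \<Longrightarrow>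
    \<exists>Ul Vl. goodL n1 n2 Ul Vl \<and> desig Ul Vl \<and> length Ul = (3*n2+1) div 2"
proof (induction n1 arbitrary: n2 rule: less_induct)
  case (less n1)
  show ?case
  proof (cases "(n1,n2) \<in> {(3,4),(4,4),(4,5),(5,5)}")
    case True
    then consider "n1 = 3 \<and> n2 = 4" | "n1 = 4 \<and> n2 = 4" | "n1 = 4 \<and> n2 = 5" | "n1 = 5 \<and> n2 = 5" by auto
    then show ?thesis
    proof cases
      case 1 then show ?thesis using b346 b346_d b346_len by auto
    next
      case 2 then show ?thesis using b446 b446_d b446_len by auto
    next
      case 3 then show ?thesis using b458 b458_d b458_len by auto
    next
      case 4 then show ?thesis using b558 b558_d b558_len by auto
    qed
  next
    case False
    have n5: "5 \<le> n1" and n55: "(n1 - 2, n2 - 2) \<noteq> (3,3)"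
      using False less.prems by auto
    have "\<exists>Ul Vl. goodL (n1-2) (n2-2) Ul Vl \<and> desig Ul Vl \<and> length Ul = (3*(n2-2)+1) div 2"
      by (rule less.IH) (use less.prems n5 n55 in auto)
    then obtain Ul Vl where h: "goodL (n1-2) (n2-2) Ul Vl" "desig Ul Vl" "length Ul = (3*(n2-2)+1) div 2"
      by blast
    have s: "goodL (n1-2+2) (n2-2+2) (SU (n1-2) (n2-2) Ul Vl) (SV (n1-2) (n2-2) Ul Vl) \<and>
       desig (SU (n1-2) (n2-2) Ul Vl) (SV (n1-2) (n2-2) Ul Vl) \<and> length (SU (n1-2) (n2-2) Ul Vl) = length Ul + 3"
      by (rule surgery[OF h(1,2)])
    have e1: "n1 - 2 + 2 = n1" "n2 - 2 + 2 = n2" using n5 less.prems by auto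
    have e2: "(3*(n2-2)+1) div 2 + 3 = (3*n2+1) div 2" using n5 less.prems by auto
    show ?thesis using s h(3) e1 e2 by metis
  qed
qed

lemma claimB:
  "3 \<le> n1 \<Longrightarrow> n1 \<le> n2 \<Longrightarrow> 3*n2 \<le> 2*K \<Longrightarrow> 2*K \<le> n1*n2 \<Longrightarrow>
    \<exists>Ul Vl. goodL n1 n2 Ul Vl \<and> length Ul = K"
proof (induction n2 arbitrary: n1 K rule: less_induct)
  case (less n2)
  note p = less.prems
  show ?case
  proof (cases "n1 + 2 \<le> n2")
    case True
    define q where "q = (2*K - 3*n2 + 6) div 2"
    define k where "k = min n1 q"
    have k3: "3 \<le> k" unfolding k_def q_def using p by auto
    have kn: "k \<le> n1" unfolding k_def by simp
    have k2: "2*k \<le> 2*K - 3*n2 + 6" unfolding k_def q_def by linarith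
    have kc: "k = n1 \<or> 2*K - 3*n2 + 6 \<le> 2*k + 1" unfolding k_def q_def by linarith
    have kK: "k \<le> K" using k2 p True by linarith
    have A1: "3*(n2-2) \<le> 2*(K-k)" using k2 kK p True by linarith
    have A2: "2*(K-k) \<le> n1*(n2-2)"
    proof (cases "k = n1")
      case True
      have "n1*(n2-2) = n1*n2 - 2*n1" by (simp add: diff_mult_distrib2)
      then show ?thesis using True p kK by (simp add: diff_mult_distrib2)
    next
      case False
      then have kk: "2*K - 3*n2 + 6 \<le> 2*k + 1" using kc by simp
      show ?thesis
      proof (cases "n1 = 3")
        case True
        then have "2*K = 3*n2" using p by simp
        then have "q = 3" unfolding q_def by simp
        then have "k = n1" unfolding k_def using True by simp
        then show ?thesis using False by simp
      next
        case n3: False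
        then have "4 \<le> n1" using p by simp
        then have "4*(n2-2) \<le> n1*(n2-2)" by (rule mult_le_mono1)
        then show ?thesis using kk p True kK by linarith
      qed
    qed
    have "\<exists>Ul Vl. goodL n1 (n2-2) Ul Vl \<and> length Ul = K - k"
      by (rule less.IH) (use p True A1 A2 in auto)
    then obtain Ul Vl where h: "goodL n1 (n2-2) Ul Vl" "length Ul = K - k" by blast
    have g1: "goodL (n2-2) n1 (map prod.swap Ul) (map prod.swap Vl)" by (rule goodL_swap[OF h(1)])
    have g2: "goodL (n2-2+2) n1 (map prod.swap Ul @ stripU (n2-2) n1 0 k) (map prod.swap Vl @ stripV (n2-2) n1 0 k)"
      by (rule strip_grow[OF g1]) (use p kn k3 in auto)
    have g3: "goodL n1 (n2-2+2) (map prod.swap (map prod.swap Ul @ stripU (n2-2) n1 0 k)) (map prod.swap (map prod.swap Vl @ stripV (n2-2) n1 0 k))"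
      by (rule goodL_swap[OF g2])
    have e: "n2 - 2 + 2 = n2" using True by simp
    have len: "length (map prod.swap (map prod.swap Ul @ stripU (n2-2) n1 0 k)) = K"
      using h(2) kK by (simp add: stripU_def)
    show ?thesis using g3 len e by metis
  next
    case False
    then have ns: "n2 \<le> n1 + 1" by simp
    show ?thesis
    proof (cases "K = (3*n2+1) div 2")
      case True
      have "(n1,n2) \<noteq> (3,3)"
      proof
        assume "(n1,n2) = (3,3)"
        then have "2*K = 9" using p by auto
        then show False by presburger
      qed
      then show ?thesis using claimA[of n1 n2] p ns True by blast
    next
      case Kne: False
      then have Kgt: "(3*n2+1) div 2 < K" using p by linarith
      show ?thesis
      proof (cases "5 \<le> n1 \<and> (n1,n2) \<noteq> (5,5)")
        case True
        define a where "a = n1 - 2"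
        define b where "b = n2 - 2"
        have ab: "n1 = a + 2" "n2 = b + 2" "3 \<le> a" "a \<le> b" "b \<le> a + 1" "(a,b) \<noteq> (3,3)"
          unfolding a_def b_def using True p ns by auto
        define Km where "Km = (3*b+1) div 2"
        define K' where "K' = max Km (K - (a+b+2))"
        define d where "d = K - K'"
        define k2 where "k2 = max 1 (d - (b+2))"
        define k1 where "k1 = d - k2"
        have Kmr: "(3*n2+1) div 2 = Km + 3" unfolding Km_def using ab by simp
        have prod: "n1*n2 = a*b + 2*a + 2*b + 4" using ab by (simp add: algebra_simps)
        have c1: "3*b \<le> 2*K'" unfolding K'_def Km_def by linarith
        have c2: "2*K' \<le> a*b"
        proof (cases "Km \<le> K - (a+b+2)")
          case True
          then have "K' = K - (a+b+2)" unfolding K'_def by simp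
          then show ?thesis using p(4) prod by linarith
        next
          case False
          then have K'e: "K' = Km" unfolding K'_def by simp
          show ?thesis
          proof (cases "a = 3")
            case True
            then have "b = 4" using ab by auto
            then show ?thesis using K'e True unfolding Km_def by simp
          next
            case False
            then have "4 \<le> a" using ab by simp
            then have "4*b \<le> a*b" by (rule mult_le_mono1)
            then show ?thesis using K'e ab unfolding Km_def by linarith
          qed
        qed
        have d4: "4 \<le> d" unfolding d_def K'_def using Kgt Kmr ab by linarith
        have dle: "d \<le> a + b + 2" unfolding d_def K'_def by linarith
        have K'K: "K' \<le> K" unfolding K'_def using Kgt Kmr by linarith
        have kk: "3 \<le> k1" "k1 \<le> b + 2" "1 \<le> k2" "k2 \<le> a"
          unfolding k1_def k2_def using d4 dle ab by auto
        have k2d: "k2 \<le> d" unfolding k2_def using d4 by simp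
        have sum: "K' + k1 + k2 = K" using k2d K'K d_def k1_def by linarith
        have "\<exists>Ul Vl. goodL a b Ul Vl \<and> length Ul = K'"
          by (rule less.IH) (use ab c1 c2 in auto)
        then obtain Ul Vl where h: "goodL a b Ul Vl" "length Ul = K'" by blast
        have L: "goodL (a+2) (b+2) (LU a b k1 k2 Ul) (LV a b k1 k2 Vl) \<and> length (LU a b k1 k2 Ul) = length Ul + k1 + k2"
          by (rule L_grow[OF h(1)]) (use ab kk in auto)
        show ?thesis using L h(2) sum ab(1,2) by metis
      next
        case False
        then have cases: "(n1 = 3 \<and> n2 = 3) \<or> (n1 = 3 \<and> n2 = 4) \<or> (n1 = 4 \<and> n2 = 4) \<or> (n1 = 4 \<and> n2 = 5) \<or> (n1 = 5 \<and> n2 = 5)"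
          using p ns by auto
        have cs2: "(n1 = 4 \<and> n2 = 4 \<and> (K = 7 \<or> K = 8)) \<or> (n1 = 4 \<and> n2 = 5 \<and> (K = 9 \<or> K = 10)) \<or>
          (n1 = 5 \<and> n2 = 5 \<and> (K = 9 \<or> K = 10 \<or> K = 11 \<or> K = 12))"
          using cases p Kgt by (elim disjE conjE; simp; presburger)
        then consider "n1 = 4 \<and> n2 = 4 \<and> K = 7" | "n1 = 4 \<and> n2 = 4 \<and> K = 8" | "n1 = 4 \<and> n2 = 5 \<and> K = 9"
          | "n1 = 4 \<and> n2 = 5 \<and> K = 10" | "n1 = 5 \<and> n2 = 5 \<and> K = 9" | "n1 = 5 \<and> n2 = 5 \<and> K = 10"
          | "n1 = 5 \<and> n2 = 5 \<and> K = 11" | "n1 = 5 \<and> n2 = 5 \<and> K = 12"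
          by blast
        then show ?thesis
        proof cases
          case 1 then show ?thesis using b447 b447_len by auto
        next
          case 2 then show ?thesis using b448 b448_len by auto
        next
          case 3 then show ?thesis using b459 b459_len by auto
        next
          case 4 then show ?thesis using b4510 b4510_len by auto
        next
          case 5 then show ?thesis using b559 b559_len by auto
        next
          case 6 then show ?thesis using b5510 b5510_len by auto
        next
          case 7 then show ?thesis using b5511 b5511_len by auto
        next
          case 8 then show ?thesis using b5512 b5512_len by auto
        qed
      qed
    qed
  qed
qed

lemma exists_config:
  assumes "3 \<le> n1" "3 \<le> n2" "3 * max n1 n2 \<le> 2*K" "2*K \<le> n1*n2"
  shows "\<exists>Ul Vl. goodL n1 n2 Ul Vl \<and> length Ul = K"
proof (cases "n1 \<le> n2")
  case True
  then show ?thesis using claimB[of n1 n2 K] assms by (simp add: max_def)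
next
  case False
  then obtain Ul Vl where "goodL n2 n1 Ul Vl" "length Ul = K"
    using claimB[of n2 n1 K] assms by (auto simp: max_def mult.commute)
  then show ?thesis using goodL_swap by fastforce
qed



theorem mainTheorem10:
  fixes n1 n2 n3 :: nat
  assumes "3 \<le> n1" and "3 \<le> n2" and "n1 \<le> n3" and "n2 \<le> n3"
    and "3 * max n1 n2 \<le> 2 * n3" and "2 * n3 \<le> n1 * n2"
  shows "metric_dim (kprod_verts (n1 + 1) (n2 + 1) (n3 + 1)) kprod_adj = 2 * n3 + 1"
proof -
  obtain Ul Vl where g: "goodL n1 n2 Ul Vl" and len: "length Ul = n3"
    using exists_config[of n1 n2 n3] assms by blast
  have v: "valid n1 n2 Ul Vl" using g goodL_def by blast
  have res: "resolving (kprod_verts (n1 + 1) (n2 + 1) (n3 + 1)) kprod_adj (Wof n1 n2 Ul Vl)"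
    using levelA[OF g] assms len by simp
  have cW: "card (Wof n1 n2 Ul Vl) = 2 * n3 + 1" using W_card[OF v] len by simp
  show ?thesis unfolding metric_dim_def
  proof (rule Least_equality)
    show "\<exists>W. resolving (kprod_verts (n1 + 1) (n2 + 1) (n3 + 1)) kprod_adj W \<and> card W = 2 * n3 + 1"
      using res cW by blast
  next
    fix k assume "\<exists>W. resolving (kprod_verts (n1 + 1) (n2 + 1) (n3 + 1)) kprod_adj W \<and> card W = k"
    then obtain W where W: "resolving (kprod_verts (n1 + 1) (n2 + 1) (n3 + 1)) kprod_adj W" "card W = k" by blast
    have "2 * (n3 + 1) - 1 \<le> card W" by (rule lower_bound[OF _ _ _ W(1)]) (use assms in auto)
    then show "2 * n3 + 1 \<le> k" using W(2) by simp
  qed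
qed


end
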